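(* Define $\alpha,\beta:[0,2\pi]\to\mathbb{R}^3$ and $\gamma:[0,\pi]\to\mathbb{R}^3$ by $\alpha(t)=(\cos t,\sin t,1)$, $\beta(t)=(\cos t,\sin t,-1)$, $\gamma(t)=\big(2\cos(2t)-1,\ 2\sin(2t),\ \tfrac98\cos t-\tfrac18\cos(3t)\big)$, and let $C=\operatorname{conv}\big(\alpha([0,2\pi])\cup\beta([0,2\pi])\cup\gamma([0,\pi])\big)$. Then the set of extreme points of $C$ is exactly $\alpha([0,2\pi])\cup\beta([0,2\pi])\cup\gamma([0,\pi])$, and every extreme point of $C$ is exposed.
   Context: An extreme point $p$ of $C$ is exposed if there is a supporting hyperplane $H$ of $C$ with $C\cap H=\{p\}$. *)

theory Defs
  imports "HOL-Analysis.Analysis"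
begin

definition exposed_point_of :: "'a::euclidean_space \<Rightarrow> 'a set \<Rightarrow> bool" where
  "exposed_point_of p C \<longleftrightarrow> p extreme_point_of C \<and>
     (\<exists>a b. a \<noteq> 0 \<and> (\<forall>x\<in>C. a \<bullet> x \<le> b) \<and> C \<inter> {x. a \<bullet> x = b} = {p})"

definition alpha_curve :: "real \<Rightarrow> real^3" where
  "alpha_curve t = vector [cos t, sin t, 1]"

definition beta_curve :: "real \<Rightarrow> real^3" where
  "beta_curve t = vector [cos t, sin t, -1]"

definition gamma_curve :: "real \<Rightarrow> real^3" where
  "gamma_curve t = vector [2 * cos (2*t) - 1, 2 * sin (2*t), 9/8 * cos t - 1/8 * cos (3*t)]"

definition C_set :: "(real^3) set" where
  "C_set = convex hull (alpha_curve ` {0..2*pi} \<union> beta_curve ` {0..2*pi} \<union> gamma_curve ` {0..pi})"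

end

theory Submission
  imports Defs
begin
lemma dot1:
  fixes a b x y :: real
  assumes "a^2+b^2=1" "x^2+y^2=1"
  shows "a*x+b*y \<le> 1" "a*x+b*y = 1 \<Longrightarrow> x = a \<and> y = b"
proof -
  have e: "(x-a)^2 + (y-b)^2 = 2 - 2*(a*x+b*y)" using assms by (simp add: power2_eq_square algebra_simps)
  have "(x-a)^2 + (y-b)^2 \<ge> 0" by simp
  then show "a*x+b*y \<le> 1" unfolding e by simp
  assume "a*x+b*y = 1"
  then have "(x-a)^2 + (y-b)^2 = 0" using e by simp
  then show "x = a \<and> y = b" by (simp add: add_nonneg_eq_0_iff)
qed

lemma alpha_gamma:
  fixes cs ys c yu :: real
  assumes "cs^2+ys^2=1" "c^2+yu^2=1" "cs<1"
  shows "cs*(4*c^2-3) + 4*ys*yu*c + (10000/(1-cs))*((3*c - c^3)/2) < 1 + 10000/(1-cs)"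
proof -
  define e where "e = 1 - cs"
  define d where "d = 1 - c"
  have e0: "e > 0" using assms e_def by simp
  have cb: "c^2 \<le> 1" "cs^2 \<le> 1"
  proof -
    have "yu^2 \<ge> 0" "ys^2 \<ge> 0" by simp_all
    then show "c^2 \<le> 1" "cs^2 \<le> 1" using assms(1,2) by linarith+
  qed
  have c1: "\<bar>c\<bar> \<le> 1" "\<bar>cs\<bar> \<le> 1" using cb by (simp_all add: abs_square_le_1)
  have d0: "d \<ge> 0" "d \<le> 2" using c1 d_def by auto
  have "4*ys*yu*c \<le> 4*\<bar>ys\<bar>*\<bar>yu\<bar>"
  proof -
    have "4*ys*yu*c \<le> \<bar>4*ys*yu*c\<bar>" by simp
    also have "\<dots> = 4*\<bar>ys\<bar>*\<bar>yu\<bar>*\<bar>c\<bar>" by (simp add: abs_mult)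
    also have "\<dots> \<le> 4*\<bar>ys\<bar>*\<bar>yu\<bar>" using c1 by (simp add: mult_left_le)
    finally show ?thesis .
  qed
  moreover have "4*\<bar>ys\<bar>*\<bar>yu\<bar> \<le> ys^2/4 + 16*yu^2"
  proof -
    have "(\<bar>ys\<bar>/2 - 4*\<bar>yu\<bar>)^2 \<ge> 0" by simp
    then show ?thesis by (simp add: power2_eq_square algebra_simps)
  qed
  moreover have "ys^2 \<le> 2*e"
  proof -
    have "ys^2 = (1-cs)*(1+cs)" using assms(1) by (simp add: power2_eq_square algebra_simps)
    also have "\<dots> \<le> (1-cs)*2" using c1 assms(3) by (intro mult_left_mono) auto
    finally show ?thesis using e_def by simp
  qed
  moreover have "yu^2 \<le> 2*d"
  proof -
    have "yu^2 = (1-c)*(1+c)" using assms(2) by (simp add: power2_eq_square algebra_simps)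
    also have "\<dots> \<le> (1-c)*2" using c1 d0 d_def by (intro mult_left_mono) auto
    finally show ?thesis using d_def by simp
  qed
  moreover have "cs*(4*c^2-3) - 1 \<le> -e + 8*d"
  proof -
    have "cs*(4*c^2-3) - 1 = -e - 4*cs*((1-c)*(1+c))" using e_def by (simp add: power2_eq_square algebra_simps)
    moreover have "- 4*cs*((1-c)*(1+c)) \<le> 4*((1-c)*(1+c))"
    proof -
      have "(1-c)*(1+c) \<ge> 0" using c1 by auto
      moreover have "1 + cs \<ge> 0" using c1 by auto
      ultimately have "(1+cs)*((1-c)*(1+c)) \<ge> 0" by simp
      then show ?thesis by (simp add: algebra_simps)
    qed
    moreover have "(1-c)*(1+c) \<le> (1-c)*2" using c1 by (intro mult_left_mono) auto
    then have "(1-c)*(1+c) \<le> d*2" using d_def by simp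
    ultimately show ?thesis by linarith
  qed
  ultimately have A: "cs*(4*c^2-3) + 4*ys*yu*c - 1 \<le> -e/2 + 40*d" by linarith
  have Z: "1 - (3*c - c^3)/2 = d^2*(3-d)/2" unfolding d_def power2_eq_square power3_eq_cube by (simp add: field_simps)
  have "d^2*1 \<le> d^2*(3-d)" using d0 by (intro mult_left_mono) auto
  then have Z2: "d^2*(3-d)/2 \<ge> d^2/2" by simp
  have "cs*(4*c^2-3) + 4*ys*yu*c - 1 < (10000/e) * (d^2*(3-d)/2)"
  proof (cases "80*d < e")
    case True
    have "(10000/e) * (d^2*(3-d)/2) \<ge> 0" using e0 d0 by simp
    then show ?thesis using A True by linarith
  next
    case False
    then have dpos: "d > 0" "d \<ge> e/80" using e0 by auto
    have "(10000/e) * (d^2*(3-d)/2) \<ge> (10000/e) * (d^2/2)" using Z2 e0 by (intro mult_left_mono) auto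
    moreover have "(10000/e) * (d^2/2) = 5000 * d * (d/e)" using e0 by (simp add: power2_eq_square field_simps)
    moreover have "d/e \<ge> 1/80" using dpos e0 by (simp add: field_simps)
    moreover have "5000 * d * (d/e) \<ge> 5000*d*(1/80)" using dpos \<open>d/e \<ge> 1/80\<close> by (intro mult_left_mono) auto
    ultimately show ?thesis using A dpos e0 by linarith
  qed
  moreover have "(10000/e) * (d^2*(3-d)/2) = (10000/(1-cs)) * (1 - (3*c - c^3)/2)" by (simp only: Z e_def)
  moreover have "(10000/(1-cs)) * (1 - (3*c - c^3)/2) = 10000/(1-cs) - (10000/(1-cs))*((3*c - c^3)/2)"
    by (simp only: right_diff_distrib mult_1_right)
  ultimately show ?thesis by linarith
qed

lemma cs1_gamma:
  fixes c yu :: real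
  assumes "c^2+yu^2=1"
  shows "(4*c^2-3) + (3*c - c^3)/2 \<le> 2" "(4*c^2-3) + (3*c - c^3)/2 = 2 \<Longrightarrow> c = 1"
proof -
  have cb: "c^2 \<le> 1" using assms by (metis le_add_same_cancel1 zero_le_power2)
  then have c1: "\<bar>c\<bar> \<le> 1" by (simp add: abs_square_le_1)
  have f: "2 - ((4*c^2-3) + (3*c - c^3)/2) = (c-1)*(c^2-7*c-10) / 2"
    by (simp add: power2_eq_square power3_eq_cube field_simps)
  have n: "c^2-7*c-10 < 0" using cb c1 by auto
  have "(c-1)*(c^2-7*c-10) \<ge> 0" using n c1 by (intro mult_nonpos_nonpos) auto
  then show "(4*c^2-3) + (3*c - c^3)/2 \<le> 2" using f by linarith
  assume "(4*c^2-3) + (3*c - c^3)/2 = 2"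
  then have "(c-1)*(c^2-7*c-10) / 2 = 0" using f by linarith
  then show "c = 1" using n by simp
qed

lemma vi: "(vector [a1,a2,a3] :: real^3) \<bullet> vector [b1,b2,b3] = a1*b1+a2*b2+a3*b3"
  by (simp add: inner_vec_def sum_3)
lemma ve: "((vector [a1,a2,a3] :: real^3) = vector [b1,b2,b3]) = (a1=b1 \<and> a2=b2 \<and> a3=b3)"
  by (simp add: vec_eq_iff forall_3)
lemma vz: "((vector [a1,a2,a3] :: real^3) = 0) = (a1=0 \<and> a2=0 \<and> a3=0)"
  by (simp add: vec_eq_iff forall_3)

lemma gamma_eq: "gamma_curve u = vector [4*(cos u)^2-3, 4* sin u*cos u, (3*cos u - (cos u)^3)/2]"
  unfolding gamma_curve_def ve cos_double_cos sin_double cos_treble_cos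
  by (simp add: algebra_simps)

lemma exposed_gen:
  fixes S :: "'a::euclidean_space set"
  assumes "p \<in> S" "a \<noteq> 0" "\<And>q. q \<in> S \<Longrightarrow> q \<noteq> p \<Longrightarrow> a \<bullet> q < a \<bullet> p"
  shows "exposed_point_of p (convex hull S)"
proof -
  have H: "a \<bullet> x \<le> a \<bullet> p \<and> (a \<bullet> x = a \<bullet> p \<longrightarrow> x = p)" if "x \<in> convex hull S" for x
  proof -
    have "\<exists>F u. finite F \<and> F \<subseteq> S \<and> (\<forall>v\<in>F. 0 \<le> u v) \<and> sum u F = 1 \<and> (\<Sum>v\<in>F. u v *\<^sub>R v) = x"
      using that unfolding convex_hull_explicit mem_Collect_eq .
    then obtain F u where F: "finite F" "F \<subseteq> S" "\<forall>v\<in>F. 0 \<le> u v" "sum u F = 1"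
      "(\<Sum>v\<in>F. u v *\<^sub>R v) = x"
      by (elim exE conjE)
    have ax: "a \<bullet> x = (\<Sum>v\<in>F. u v * (a \<bullet> v))"
      using F(5) by (auto simp: inner_sum_right)
    have le: "a \<bullet> v \<le> a \<bullet> p" if "v \<in> F" for v
      using assms(3)[of v] F(2) that by force
    have d: "a \<bullet> p - a \<bullet> x = (\<Sum>v\<in>F. u v * (a \<bullet> p - a \<bullet> v))"
    proof -
      have "(\<Sum>v\<in>F. u v * (a \<bullet> p - a \<bullet> v)) = (\<Sum>v\<in>F. u v) * (a \<bullet> p) - (\<Sum>v\<in>F. u v * (a \<bullet> v))"
        by (simp add: right_diff_distrib sum_subtractf sum_distrib_right)
      then show ?thesis using ax F(4) by simp
    qed
    have nn: "\<forall>v\<in>F. 0 \<le> u v * (a \<bullet> p - a \<bullet> v)"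
    proof
      fix v assume v: "v \<in> F"
      have "0 \<le> u v" using F(3) v by blast
      moreover have "0 \<le> a \<bullet> p - a \<bullet> v" using le[OF v] by simp
      ultimately show "0 \<le> u v * (a \<bullet> p - a \<bullet> v)" by (rule mult_nonneg_nonneg)
    qed
    have "0 \<le> (\<Sum>v\<in>F. u v * (a \<bullet> p - a \<bullet> v))" by (rule sum_nonneg) (use nn in blast)
    have nn': "\<And>v. v \<in> F \<Longrightarrow> 0 \<le> u v * (a \<bullet> p - a \<bullet> v)" using nn by blast
    have "a \<bullet> x \<le> a \<bullet> p" using d \<open>0 \<le> (\<Sum>v\<in>F. u v * (a \<bullet> p - a \<bullet> v))\<close> by linarith
    moreover have "x = p" if eq: "a \<bullet> x = a \<bullet> p"
    proof -
      have "(\<Sum>v\<in>F. u v * (a \<bullet> p - a \<bullet> v)) = 0" using d eq by simp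
      then have zz: "\<forall>v\<in>F. u v * (a \<bullet> p - a \<bullet> v) = 0"
        using sum_nonneg_eq_0_iff[of F "\<lambda>v. u v * (a \<bullet> p - a \<bullet> v)"] F(1) nn' by blast
      have z: "u v = 0" if "v \<in> F" "v \<noteq> p" for v
      proof -
        have "a \<bullet> v < a \<bullet> p" using assms(3)[of v] F(2) that by blast
        moreover have "u v * (a \<bullet> p - a \<bullet> v) = 0" using zz that(1) by blast
        ultimately show ?thesis by simp
      qed
      have "x = (\<Sum>v\<in>F. u v *\<^sub>R v)" using F(5) by simp
      also have "\<dots> = (\<Sum>v\<in>F. u v *\<^sub>R p)"
      proof (rule sum.cong[OF refl])
        fix v assume "v \<in> F"
        then show "u v *\<^sub>R v = u v *\<^sub>R p" by (cases "v = p") (simp_all add: z)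
      qed
      also have "\<dots> = p" using F(4) by (simp add: scaleR_sum_left[symmetric])
      finally show ?thesis .
    qed
    ultimately show ?thesis by blast
  qed
  have pin: "p \<in> convex hull S" using assms(1) by (simp add: hull_inc)
  have I: "convex hull S \<inter> {x. a \<bullet> x = a \<bullet> p} = {p}" using H pin by blast
  have ext: "p extreme_point_of convex hull S"
    by (rule extreme_point_of_Int_supporting_hyperplane_le[OF I]) (use H in blast)
  show ?thesis unfolding exposed_point_of_def
    using ext assms(2) H I by blast
qed

lemma sep_alpha:
  "\<exists>a. a \<noteq> 0 \<and> (\<forall>q \<in> alpha_curve ` A \<union> beta_curve ` B \<union> gamma_curve ` G.
      q \<noteq> alpha_curve s \<longrightarrow> a \<bullet> q < a \<bullet> alpha_curve s)"
proof (cases "cos s = 1")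
  case True
  then have s0: "sin s = 0" using sin_cos_squared_add[of s] by simp
  let ?a = "vector [1, 0, 1] :: real^3"
  have p: "alpha_curve s = vector [1, 0, 1]" unfolding alpha_curve_def using True s0 by simp
  have "?a \<bullet> q < ?a \<bullet> alpha_curve s"
    if q: "q \<in> alpha_curve ` A \<union> beta_curve ` B \<union> gamma_curve ` G" "q \<noteq> alpha_curve s" for q
  proof -
    consider t where "q = alpha_curve t" | t where "q = beta_curve t" | u where "q = gamma_curve u"
      using q(1) by blast
    then show ?thesis
    proof cases
      case (1 t)
      have "cos t \<le> 1" by simp
      moreover have "cos t \<noteq> 1"
      proof
        assume "cos t = 1"
        then have "sin t = 0" using sin_cos_squared_add[of t] by simp
        then show False using q(2) 1 p \<open>cos t = 1\<close> by (simp add: alpha_curve_def)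
      qed
      ultimately have "cos t < 1" by linarith
      then show ?thesis using 1 p by (simp add: alpha_curve_def vi)
    next
      case (2 t)
      have "cos t < 3" using cos_le_one[of t] by linarith
      then show ?thesis using 2 p by (simp add: beta_curve_def vi)
    next
      case (3 u)
      have sq: "(cos u)^2 + (sin u)^2 = 1" by simp
      have v: "?a \<bullet> q = (4*(cos u)^2-3) + (3*cos u - (cos u)^3)/2"
        using 3 by (simp add: gamma_eq vi)
      have "cos u \<noteq> 1"
      proof
        assume "cos u = 1"
        then have "sin u = 0" using sin_cos_squared_add[of u] by simp
        then show False using q(2) 3 p \<open>cos u = 1\<close> by (simp add: gamma_eq ve)
      qed
      then have "?a \<bullet> q \<noteq> 2" using cs1_gamma(2)[OF sq] v by auto
      moreover have "?a \<bullet> q \<le> 2" using cs1_gamma(1)[OF sq] v by auto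
      ultimately show ?thesis using p by (simp add: vi)
    qed
  qed
  moreover have "?a \<noteq> 0" by (simp add: vz)
  ultimately show ?thesis by blast
next
  case False
  have cs1: "cos s < 1" using False cos_le_one[of s] by linarith
  define L where "L = 10000 / (1 - cos s)"
  have L0: "L > 0" using cs1 L_def by simp
  let ?a = "vector [cos s, sin s, L] :: real^3"
  have sqs: "(cos s)^2 + (sin s)^2 = 1" by simp
  have pv: "?a \<bullet> alpha_curve s = 1 + L" by (simp add: alpha_curve_def vi power2_eq_square[symmetric])
  have "?a \<bullet> q < ?a \<bullet> alpha_curve s"
    if q: "q \<in> alpha_curve ` A \<union> beta_curve ` B \<union> gamma_curve ` G" "q \<noteq> alpha_curve s" for q
  proof -
    consider t where "q = alpha_curve t" | t where "q = beta_curve t" | u where "q = gamma_curve u"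
      using q(1) by blast
    then show ?thesis
    proof cases
      case (1 t)
      have sqt: "(cos t)^2 + (sin t)^2 = 1" by simp
      have "cos s * cos t + sin s * sin t \<noteq> 1"
        using dot1(2)[OF sqs sqt] q(2) 1 by (auto simp: alpha_curve_def)
      moreover have "cos s * cos t + sin s * sin t \<le> 1" using dot1(1)[OF sqs sqt] .
      ultimately show ?thesis using 1 pv by (simp add: alpha_curve_def vi)
    next
      case (2 t)
      have sqt: "(cos t)^2 + (sin t)^2 = 1" by simp
      have "cos s * cos t + sin s * sin t \<le> 1" using dot1(1)[OF sqs sqt] .
      then show ?thesis using 2 pv L0 by (simp add: beta_curve_def vi)
    next
      case (3 u)
      have squ: "(cos u)^2 + (sin u)^2 = 1" by simp
      have "?a \<bullet> q = cos s*(4*(cos u)^2-3) + 4* sin s* sin u*cos u + L*((3*cos u - (cos u)^3)/2)"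
        using 3 by (simp add: gamma_eq vi algebra_simps)
      then show ?thesis using alpha_gamma[OF sqs squ cs1] pv L_def by simp
    qed
  qed
  moreover have "?a \<noteq> 0" using L0 by (simp add: vz)
  ultimately show ?thesis by blast
qed

lemma sep_beta:
  "\<exists>a. a \<noteq> 0 \<and> (\<forall>q \<in> alpha_curve ` A \<union> beta_curve ` B \<union> gamma_curve ` G.
      q \<noteq> beta_curve s \<longrightarrow> a \<bullet> q < a \<bullet> beta_curve s)"
proof (cases "cos s = 1")
  case True
  then have s0: "sin s = 0" using sin_cos_squared_add[of s] by simp
  let ?a = "vector [1, 0, -1] :: real^3"
  have p: "beta_curve s = vector [1, 0, -1]" unfolding beta_curve_def using True s0 by simp
  have "?a \<bullet> q < ?a \<bullet> beta_curve s"
    if q: "q \<in> alpha_curve ` A \<union> beta_curve ` B \<union> gamma_curve ` G" "q \<noteq> beta_curve s" for q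
  proof -
    consider t where "q = alpha_curve t" | t where "q = beta_curve t" | u where "q = gamma_curve u"
      using q(1) by blast
    then show ?thesis
    proof cases
      case (2 t)
      have "cos t \<le> 1" by simp
      moreover have "cos t \<noteq> 1"
      proof
        assume "cos t = 1"
        then have "sin t = 0" using sin_cos_squared_add[of t] by simp
        then show False using q(2) 2 p \<open>cos t = 1\<close> by (simp add: beta_curve_def)
      qed
      ultimately have "cos t < 1" by linarith
      then show ?thesis using 2 p by (simp add: beta_curve_def vi)
    next
      case (1 t)
      have "cos t < 3" using cos_le_one[of t] by linarith
      then show ?thesis using 1 p by (simp add: alpha_curve_def vi)
    next
      case (3 u)
      have sq: "(- cos u)^2 + (- sin u)^2 = 1" by simp
      have v: "?a \<bullet> q = (4*(- cos u)^2-3) + (3*(- cos u) - (- cos u)^3)/2"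
        using 3 by (simp add: gamma_eq vi)
      have "cos u \<noteq> -1"
      proof
        assume "cos u = -1"
        then have "sin u = 0" using sin_cos_squared_add[of u] by simp
        then show False using q(2) 3 p \<open>cos u = -1\<close> by (simp add: gamma_eq ve)
      qed
      then have "?a \<bullet> q \<noteq> 2" using cs1_gamma(2)[OF sq] v by auto
      moreover have "?a \<bullet> q \<le> 2" using cs1_gamma(1)[OF sq] v by auto
      ultimately show ?thesis using p by (simp add: vi)
    qed
  qed
  moreover have "?a \<noteq> 0" by (simp add: vz)
  ultimately show ?thesis by blast
next
  case False
  have cs1: "cos s < 1" using False cos_le_one[of s] by linarith
  define L where "L = 10000 / (1 - cos s)"
  have L0: "L > 0" using cs1 L_def by simp
  let ?a = "vector [cos s, sin s, -L] :: real^3"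
  have sqs: "(cos s)^2 + (sin s)^2 = 1" by simp
  have pv: "?a \<bullet> beta_curve s = 1 + L" by (simp add: beta_curve_def vi power2_eq_square[symmetric])
  have "?a \<bullet> q < ?a \<bullet> beta_curve s"
    if q: "q \<in> alpha_curve ` A \<union> beta_curve ` B \<union> gamma_curve ` G" "q \<noteq> beta_curve s" for q
  proof -
    consider t where "q = alpha_curve t" | t where "q = beta_curve t" | u where "q = gamma_curve u"
      using q(1) by blast
    then show ?thesis
    proof cases
      case (2 t)
      have sqt: "(cos t)^2 + (sin t)^2 = 1" by simp
      have "cos s * cos t + sin s * sin t \<noteq> 1"
        using dot1(2)[OF sqs sqt] q(2) 2 by (auto simp: beta_curve_def)
      moreover have "cos s * cos t + sin s * sin t \<le> 1" using dot1(1)[OF sqs sqt] .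
      ultimately show ?thesis using 2 pv by (simp add: beta_curve_def vi)
    next
      case (1 t)
      have sqt: "(cos t)^2 + (sin t)^2 = 1" by simp
      have "cos s * cos t + sin s * sin t \<le> 1" using dot1(1)[OF sqs sqt] .
      then show ?thesis using 1 pv L0 by (simp add: alpha_curve_def vi)
    next
      case (3 u)
      have squ: "(- cos u)^2 + (- sin u)^2 = 1" by simp
      have "?a \<bullet> q = cos s*(4*(- cos u)^2-3) + 4* sin s*(- sin u)*(- cos u) + L*((3*(- cos u) - (- cos u)^3)/2)"
        using 3 by (simp add: gamma_eq vi algebra_simps)
      then show ?thesis using alpha_gamma[OF sqs squ cs1] pv L_def by simp
    qed
  qed
  moreover have "?a \<noteq> 0" using L0 by (simp add: vz)
  ultimately show ?thesis by blast
qed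

lemma sep_gamma:
  assumes t: "0 < t" "t < pi"
  shows "\<exists>a. a \<noteq> 0 \<and> (\<forall>q \<in> alpha_curve ` A \<union> beta_curve ` B \<union> gamma_curve ` {0..pi}.
      q \<noteq> gamma_curve t \<longrightarrow> a \<bullet> q < a \<bullet> gamma_curve t)"
proof -
  let ?C = "cos (2*t)" and ?S = "sin (2*t)"
  let ?a = "vector [?C, ?S, 0] :: real^3"
  have sq: "?C^2 + ?S^2 = 1" by simp
  have st: "sin t > 0" using t by (simp add: sin_gt_zero)
  have C1: "?C < 1"
  proof -
    have "?C = 1 - 2 * (sin t)^2" by (simp add: cos_double_sin)
    moreover have "(sin t)^2 > 0" using st by simp
    ultimately show ?thesis by linarith
  qed
  have h3: "cos (t*2)*cos (t*2) + sin (t*2) * sin(t*2) = 1" by (rule sin_cos_squared_add3)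
  have pv: "?a \<bullet> gamma_curve t = 2 - ?C"
    apply (simp add: gamma_curve_def vi algebra_simps power2_eq_square)
    using h3 by linarith
  have "?a \<bullet> q < ?a \<bullet> gamma_curve t"
    if q: "q \<in> alpha_curve ` A \<union> beta_curve ` B \<union> gamma_curve ` {0..pi}" "q \<noteq> gamma_curve t" for q
  proof -
    consider s where "q = alpha_curve s" | s where "q = beta_curve s" | u where "q = gamma_curve u" "u \<in> {0..pi}"
      using q(1) by blast
    then show ?thesis
    proof cases
      case (1 s)
      have "?C * cos s + ?S * sin s \<le> 1" using dot1(1)[OF sq, of "cos s" "sin s"] by simp
      then show ?thesis using 1 pv C1 by (simp add: alpha_curve_def vi)
    next
      case (2 s)
      have "?C * cos s + ?S * sin s \<le> 1" using dot1(1)[OF sq, of "cos s" "sin s"] by simp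
      then show ?thesis using 2 pv C1 by (simp add: beta_curve_def vi)
    next
      case (3 u)
      have squ: "(cos (2*u))^2 + (sin (2*u))^2 = 1" by simp
      have v: "?a \<bullet> q = 2 * (?C * cos (2*u) + ?S * sin (2*u)) - ?C"
        using 3 by (simp add: gamma_curve_def vi algebra_simps)
      have le: "?C * cos (2*u) + ?S * sin (2*u) \<le> 1" using dot1(1)[OF sq squ] .
      have "?C * cos (2*u) + ?S * sin (2*u) \<noteq> 1"
      proof
        assume "?C * cos (2*u) + ?S * sin (2*u) = 1"
        then have e: "cos (2*u) = ?C" "sin (2*u) = ?S" using dot1(2)[OF sq squ] by auto
        have su: "sin u \<ge> 0" using 3(2) by (simp add: sin_ge_zero)
        have "(cos u)^2 = (cos t)^2" using e(1) by (simp add: cos_double_cos)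
        then have "(sin u)^2 = (sin t)^2" using sin_cos_squared_add[of u] sin_cos_squared_add[of t] by linarith
        then have "sin u = sin t" using su st by (simp add: power2_eq_iff_nonneg)
        moreover have "sin u * cos u = sin t * cos t" using e(2) by (simp add: sin_double)
        ultimately have cu: "cos u = cos t" using st by simp
        have "gamma_curve u = gamma_curve t"
          unfolding gamma_curve_def e cos_treble_cos cu ..
        then show False using q(2) 3 by simp
      qed
      then show ?thesis using le v pv by simp
    qed
  qed
  moreover have "?a \<noteq> 0"
  proof
    assume "?a = 0"
    then have "?C = 0" "?S = 0" by (simp_all add: vz)
    then show False using sq by (simp only:) simp
  qed
  ultimately show ?thesis by blast
qed

theorem proposition5p4:
  shows "{p. p extreme_point_of C_set} =
           alpha_curve ` {0..2*pi} \<union> beta_curve ` {0..2*pi} \<union> gamma_curve ` {0..pi}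
         \<and> (\<forall>p. p extreme_point_of C_set \<longrightarrow> exposed_point_of p C_set)"
proof -
  let ?S = "alpha_curve ` {0..2*pi} \<union> beta_curve ` {0..2*pi} \<union> gamma_curve ` {0..pi}"
  have g0: "gamma_curve 0 = alpha_curve 0" by (simp add: gamma_eq alpha_curve_def ve)
  have gpi: "gamma_curve pi = beta_curve 0" by (simp add: gamma_eq beta_curve_def ve)
  have key: "\<exists>a. a \<noteq> 0 \<and> (\<forall>q\<in>?S. q \<noteq> p \<longrightarrow> a \<bullet> q < a \<bullet> p)" if p: "p \<in> ?S" for p
  proof -
    consider s where "p = alpha_curve s" | s where "p = beta_curve s"
      | t where "p = gamma_curve t" "0 < t" "t < pi"
      | "p = gamma_curve 0" | "p = gamma_curve pi"
      using p by (auto simp: less_eq_real_def)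
    then show ?thesis
    proof cases
      case 1 then show ?thesis using sep_alpha by blast
    next
      case 2 then show ?thesis using sep_beta by blast
    next
      case 3 then show ?thesis using sep_gamma by blast
    next
      case 4 then show ?thesis using sep_alpha g0 by metis
    next
      case 5 then show ?thesis using sep_beta gpi by metis
    qed
  qed
  have exp: "exposed_point_of p C_set" if pS: "p \<in> ?S" for p
  proof -
    obtain a where "a \<noteq> 0" "\<forall>q\<in>?S. q \<noteq> p \<longrightarrow> a \<bullet> q < a \<bullet> p" using key[OF pS] by blast
    then show ?thesis unfolding C_set_def using exposed_gen[OF pS] by blast
  qed
  have sub: "p \<in> ?S" if "p extreme_point_of C_set" for p
    using that extreme_point_of_convex_hull unfolding C_set_def by blast
  show ?thesis
  proof
    show "{p. p extreme_point_of C_set} = ?S"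
      using sub exp unfolding exposed_point_of_def by blast
    show "\<forall>p. p extreme_point_of C_set \<longrightarrow> exposed_point_of p C_set"
      using sub exp by blast
  qed
qed

end
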